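(* Let $\mathcal C$ be a Clifford circuit on $n$ qubits of depth $\Delta$. The accumulator $F\mapsto\overrightarrow F$ and the back-accumulator $F\mapsto\overleftarrow F$ are group automorphisms of $\overline{\mathcal P}_{n(\Delta+1)}$.
   Context: A Clifford circuit on $n$ qubits is a finite sequence of operations, each a unitary Clifford gate or a Pauli measurement, each with a level in $\{1,2,\dots\}$, operations of equal level having disjoint supports; the depth $\Delta$ is the maximal level. $\overline{\mathcal P}_N$ is the $N$-qubit Pauli group modulo the phases $\{\pm1,\pm i\}$. For $1\le\ell\le\Delta$, $U_\ell$ is the product of all unitary gates of level $\ell$ (identity if none). A fault operator $F\in\overline{\mathcal P}_{n(\Delta+1)}$ acts on qubits $(\ell+0.5,q)$, $0\le\ell\le\Delta$, $1\le q\le n$; $F_{\ell+0.5}\in\overline{\mathcal P}_n$ is its component on level $\ell+0.5$. Cumulant $\overrightarrow F$: start with $\overrightarrow F=F$; for $\ell=1,\dots,\Delta$ in increasing order replace $\overrightarrow F_{\ell+0.5}$ by $\overrightarrow F_{\ell+0.5}\cdot U_\ell\overrightarrow F_{\ell-0.5}U_\ell^{-1}$. Back-cumulant $\overleftarrow F$: start with $\overleftarrow F=F$; for $\ell=\Delta,\dots,1$ in decreasing order replace $\overleftarrow F_{\ell-0.5}$ by $\overleftarrow F_{\ell-0.5}\cdot U_\ell^{-1}\overleftarrow F_{\ell+0.5}U_\ell$. *)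

theory Defs
  imports "Jordan_Normal_Form.Schur_Decomposition" "HOL-Algebra.Group"
begin

datatype pauli1 = PI | PX | PY | PZ

text \<open>Matrix entries (row bit, column bit) of the single-qubit Pauli matrices;
  False = basis state 0, True = basis state 1.\<close>
fun pmat :: "pauli1 \<Rightarrow> bool \<Rightarrow> bool \<Rightarrow> complex" where
  "pmat PI r c = (if r = c then 1 else 0)"
| "pmat PX r c = (if r \<noteq> c then 1 else 0)"
| "pmat PY r c = (if r = c then 0 else if r then \<i> else - \<i>)"
| "pmat PZ r c = (if r = c then (if r then -1 else 1) else 0)"

fun pmul1 :: "pauli1 \<Rightarrow> pauli1 \<Rightarrow> pauli1" where
  "pmul1 PI b = b"
| "pmul1 a PI = a"
| "pmul1 PX PX = PI" | "pmul1 PY PY = PI" | "pmul1 PZ PZ = PI"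
| "pmul1 PX PY = PZ" | "pmul1 PY PX = PZ"
| "pmul1 PY PZ = PX" | "pmul1 PZ PY = PX"
| "pmul1 PZ PX = PY" | "pmul1 PX PZ = PY"

text \<open>A Pauli string on n qubits is a function from qubit indices (0..n-1) to pauli1;
  its matrix is the tensor product, acting on C^(2^n) with qubit q = bit q of the index.\<close>
definition pauli_mat :: "nat \<Rightarrow> (nat \<Rightarrow> pauli1) \<Rightarrow> complex mat" where
  "pauli_mat n p = mat (2^n) (2^n) (\<lambda>(r, c). \<Prod>q<n. pmat (p q) (bit r q) (bit c q))"

definition clifford :: "nat \<Rightarrow> complex mat \<Rightarrow> bool" where
  "clifford n U \<longleftrightarrow> U \<in> carrier_mat (2^n) (2^n)
     \<and> U * mat_adjoint U = 1\<^sub>m (2^n) \<and> mat_adjoint U * U = 1\<^sub>m (2^n)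
     \<and> (\<forall>p. \<exists>c p'. U * pauli_mat n p * mat_adjoint U = c \<cdot>\<^sub>m pauli_mat n p')"

definition conj_pauli :: "nat \<Rightarrow> complex mat \<Rightarrow> complex mat \<Rightarrow> (nat \<Rightarrow> pauli1) \<Rightarrow> (nat \<Rightarrow> pauli1)" where
  "conj_pauli n A B p = (SOME p'. (\<forall>q\<ge>n. p' q = PI) \<and>
      (\<exists>c. A * pauli_mat n p * B = c \<cdot>\<^sub>m pauli_mat n p'))"

text \<open>F l q is the component of F on qubit (l+0.5, q), 0 \<le> l \<le> Delta, 0 \<le> q < n;
  canonical representatives are PI outside that range.\<close>
definition fault_group :: "nat \<Rightarrow> nat \<Rightarrow> (nat \<Rightarrow> nat \<Rightarrow> pauli1) monoid" where
  "fault_group n \<Delta> = \<lparr> carrier = {F. \<forall>l q. (\<Delta> < l \<or> n \<le> q) \<longrightarrow> F l q = PI},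
      monoid.mult = (\<lambda>F G l q. pmul1 (F l q) (G l q)),
      monoid.one = (\<lambda>l q. PI) \<rparr>"

text \<open>U l is the unitary of level l (1 \<le> l \<le> Delta); its inverse is its adjoint.
  cumulant_steps k = result after processing levels 1..k.\<close>
fun cumulant_steps :: "nat \<Rightarrow> (nat \<Rightarrow> complex mat) \<Rightarrow> (nat \<Rightarrow> nat \<Rightarrow> pauli1) \<Rightarrow> nat \<Rightarrow> (nat \<Rightarrow> nat \<Rightarrow> pauli1)" where
  "cumulant_steps n U F 0 = F"
| "cumulant_steps n U F (Suc k) =
     (let G = cumulant_steps n U F k
      in G(Suc k := (\<lambda>q. pmul1 (G (Suc k) q)
                          (conj_pauli n (U (Suc k)) (mat_adjoint (U (Suc k))) (G k) q))))"

definition cumulant :: "nat \<Rightarrow> nat \<Rightarrow> (nat \<Rightarrow> complex mat) \<Rightarrow> (nat \<Rightarrow> nat \<Rightarrow> pauli1) \<Rightarrow> (nat \<Rightarrow> nat \<Rightarrow> pauli1)" where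
  "cumulant n \<Delta> U F = cumulant_steps n U F \<Delta>"

text \<open>back_steps k = result after processing levels Delta, Delta-1, ..., Delta-k+1.\<close>
fun back_steps :: "nat \<Rightarrow> nat \<Rightarrow> (nat \<Rightarrow> complex mat) \<Rightarrow> (nat \<Rightarrow> nat \<Rightarrow> pauli1) \<Rightarrow> nat \<Rightarrow> (nat \<Rightarrow> nat \<Rightarrow> pauli1)" where
  "back_steps n \<Delta> U F 0 = F"
| "back_steps n \<Delta> U F (Suc k) =
     (let G = back_steps n \<Delta> U F k; l = \<Delta> - k
      in G(l - 1 := (\<lambda>q. pmul1 (G (l - 1) q)
                          (conj_pauli n (mat_adjoint (U l)) (U l) (G l) q))))"

definition back_cumulant :: "nat \<Rightarrow> nat \<Rightarrow> (nat \<Rightarrow> complex mat) \<Rightarrow> (nat \<Rightarrow> nat \<Rightarrow> pauli1) \<Rightarrow> (nat \<Rightarrow> nat \<Rightarrow> pauli1)" where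
  "back_cumulant n \<Delta> U F = back_steps n \<Delta> U F \<Delta>"

end

theory Submission
  imports Defs
begin

lemma pmul1_assoc: "pmul1 (pmul1 a b) c = pmul1 a (pmul1 b c)"
  by (cases a; cases b; cases c; simp)
lemma pmul1_comm: "pmul1 a b = pmul1 b a"
  by (cases a; cases b; simp)
lemma pmul1_self[simp]: "pmul1 a a = PI"
  by (cases a; simp)
lemma pmul1_PI2[simp]: "pmul1 a PI = a"
  by (cases a; simp)
lemma pmul1_cancel[simp]: "pmul1 (pmul1 a b) b = a"
  by (simp add: pmul1_assoc)
lemma pmul1_ac: "pmul1 (pmul1 a b) (pmul1 c d) = pmul1 (pmul1 a c) (pmul1 b d)"
  by (cases a; cases b; cases c; cases d; simp)

lemma step_iso:
  fixes \<phi> :: "(nat \<Rightarrow> pauli1) \<Rightarrow> nat \<Rightarrow> pauli1"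
  assumes "i \<le> \<Delta>" "i \<noteq> j"
    and hom: "\<And>a b q. \<phi> (\<lambda>q. pmul1 (a q) (b q)) q = pmul1 (\<phi> a q) (\<phi> b q)"
    and out: "\<And>a q. n \<le> q \<Longrightarrow> \<phi> a q = PI"
  shows "(\<lambda>G. G(i := (\<lambda>q. pmul1 (G i q) (\<phi> (G j) q)))) \<in> iso (fault_group n \<Delta>) (fault_group n \<Delta>)"
proof (rule isoI)
  let ?S = "(\<lambda>G. G(i := (\<lambda>q. pmul1 (G i q) (\<phi> (G j) q))))"
  have cl: "?S G \<in> carrier (fault_group n \<Delta>)" if "G \<in> carrier (fault_group n \<Delta>)" for G
    using that assms(1) out by (auto simp: fault_group_def)
  show "?S \<in> hom (fault_group n \<Delta>) (fault_group n \<Delta>)"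
    unfolding hom_def
  proof (intro CollectI conjI ballI Pi_I)
    show "?S G \<in> carrier (fault_group n \<Delta>)" if "G \<in> carrier (fault_group n \<Delta>)" for G
      using cl that .
    fix x y assume "x \<in> carrier (fault_group n \<Delta>)" "y \<in> carrier (fault_group n \<Delta>)"
    show "?S (x \<otimes>\<^bsub>fault_group n \<Delta>\<^esub> y) = ?S x \<otimes>\<^bsub>fault_group n \<Delta>\<^esub> ?S y"
      using assms(2) by (auto simp: fault_group_def hom pmul1_ac)
  qed
  show "bij_betw ?S (carrier (fault_group n \<Delta>)) (carrier (fault_group n \<Delta>))"
  proof (rule bij_betw_byWitness[where f'="?S"])
    show "\<forall>a\<in>carrier (fault_group n \<Delta>). ?S (?S a) = a"
      using assms(2) by (auto simp: fun_eq_iff)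
    show "\<forall>a\<in>carrier (fault_group n \<Delta>). ?S (?S a) = a"
      using assms(2) by (auto simp: fun_eq_iff)
    show "?S ` carrier (fault_group n \<Delta>) \<subseteq> carrier (fault_group n \<Delta>)" using cl by blast
    show "?S ` carrier (fault_group n \<Delta>) \<subseteq> carrier (fault_group n \<Delta>)" using cl by blast
  qed
qed



lemma adjoint_carrier: "A \<in> carrier_mat m k \<Longrightarrow> mat_adjoint A \<in> carrier_mat k m"
  unfolding mat_adjoint_def carrier_mat_def by auto

fun om :: "pauli1 \<Rightarrow> pauli1 \<Rightarrow> complex" where
  "om PX PY = \<i>" | "om PY PX = - \<i>" | "om PY PZ = \<i>" | "om PZ PY = - \<i>"
| "om PZ PX = \<i>" | "om PX PZ = - \<i>" | "om _ _ = 1"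

lemma om_nz: "om a b \<noteq> 0"
  by (cases a; cases b; simp)

lemma pmat_prod1:
  "pmat a r False * pmat b False s + pmat a r True * pmat b True s = om a b * pmat (pmul1 a b) r s"
  by (cases a; cases b; cases r; cases s; simp)

lemma sum_split2: "(\<Sum>k<2*N. f k) = (\<Sum>m<N. f (2*m) + f (2*m+1))" for N :: nat and f :: "nat \<Rightarrow> 'a::comm_monoid_add"
proof (induction N)
  case 0 then show ?case by simp
next
  case (Suc N)
  have "{..<2 * Suc N} = insert (2*N+1) (insert (2*N) {..<2*N})" by auto
  then show ?case using Suc by (simp add: algebra_simps)
qed

lemma sum_prod_bits:
  "(\<Sum>k<2^n. \<Prod>j<n. g j (bit (k::nat) j)) = (\<Prod>j<n. g j False + g j True)"
  for g :: "nat \<Rightarrow> bool \<Rightarrow> 'a::comm_semiring_1"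
proof (induction n arbitrary: g)
  case 0 then show ?case by simp
next
  case (Suc n)
  have "(\<Sum>k<2^Suc n. \<Prod>j<Suc n. g j (bit (k::nat) j))
      = (\<Sum>k<2*2^n. g 0 (odd (k::nat)) * (\<Prod>j<n. g (Suc j) (bit (k div 2) j)))"
    by (simp add: prod.lessThan_Suc_shift bit_0 bit_Suc del: prod.lessThan_Suc)
  also have "\<dots> = (\<Sum>m<2^n. (g 0 False + g 0 True) * (\<Prod>j<n. g (Suc j) (bit (m::nat) j)))"
    by (subst sum_split2) (simp add: distrib_right)
  also have "\<dots> = (g 0 False + g 0 True) * (\<Prod>j<n. g (Suc j) False + g (Suc j) True)"
    by (simp add: sum_distrib_left[symmetric] Suc.IH[of "\<lambda>j. g (Suc j)"])
  also have "\<dots> = (\<Prod>j<Suc n. g j False + g j True)"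
    by (simp only: prod.lessThan_Suc_shift)
  finally show ?case .
qed

lemma pauli_carrier[simp]: "pauli_mat n p \<in> carrier_mat (2^n) (2^n)"
  by (simp add: pauli_mat_def)

lemma pauli_dims[simp]: "dim_row (pauli_mat n p) = 2^n" "dim_col (pauli_mat n p) = 2^n"
  by (simp_all add: pauli_mat_def)

lemma pauli_index: "r < 2^n \<Longrightarrow> c < 2^n \<Longrightarrow>
   pauli_mat n p $$ (r, c) = (\<Prod>q<n. pmat (p q) (bit r q) (bit c q))"
  by (simp add: pauli_mat_def)

lemma pauli_mult:
  "pauli_mat n p * pauli_mat n p' = (\<Prod>j<n. om (p j) (p' j)) \<cdot>\<^sub>m pauli_mat n (\<lambda>j. pmul1 (p j) (p' j))"
proof (rule eq_matI)
  fix r c assume r: "r < dim_row ((\<Prod>j<n. om (p j) (p' j)) \<cdot>\<^sub>m pauli_mat n (\<lambda>j. pmul1 (p j) (p' j)))"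
    and c: "c < dim_col ((\<Prod>j<n. om (p j) (p' j)) \<cdot>\<^sub>m pauli_mat n (\<lambda>j. pmul1 (p j) (p' j)))"
  then have r: "r < 2^n" and c: "c < 2^n" by auto
  have "(pauli_mat n p * pauli_mat n p') $$ (r, c)
     = (\<Sum>k<2^n. (\<Prod>q<n. pmat (p q) (bit r q) (bit (k::nat) q)) * (\<Prod>q<n. pmat (p' q) (bit k q) (bit c q)))"
    using r c by (simp add: scalar_prod_def pauli_index atLeast0LessThan)
  also have "\<dots> = (\<Sum>k<2^n. \<Prod>q<n. pmat (p q) (bit r q) (bit (k::nat) q) * pmat (p' q) (bit k q) (bit c q))"
    by (simp add: prod.distrib)
  also have "\<dots> = (\<Prod>q<n. om (p q) (p' q) * pmat (pmul1 (p q) (p' q)) (bit r q) (bit c q))"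
    by (subst sum_prod_bits) (simp add: pmat_prod1)
  also have "\<dots> = ((\<Prod>j<n. om (p j) (p' j)) \<cdot>\<^sub>m pauli_mat n (\<lambda>j. pmul1 (p j) (p' j))) $$ (r, c)"
    using r c by (simp add: prod.distrib pauli_index)
  finally show "(pauli_mat n p * pauli_mat n p') $$ (r, c) =
     ((\<Prod>j<n. om (p j) (p' j)) \<cdot>\<^sub>m pauli_mat n (\<lambda>j. pmul1 (p j) (p' j))) $$ (r, c)" .
qed auto

lemma smult_smult_m: "(a::complex) \<cdot>\<^sub>m (b \<cdot>\<^sub>m M) = (a * b) \<cdot>\<^sub>m M"
  by (rule eq_matI) auto

lemma pauli_sq: "pauli_mat n p * pauli_mat n p = (\<Prod>j<n. om (p j) (p j)) \<cdot>\<^sub>m pauli_mat n (\<lambda>j. PI)"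
  by (simp add: pauli_mult)

lemma pauli_id00: "pauli_mat n (\<lambda>j. PI) $$ (r, r) = 1" if "r < 2^n"
  using that by (simp add: pauli_index)

lemma det_id:
  assumes c: "c \<noteq> 0" and eq: "c \<cdot>\<^sub>m pauli_mat n (\<lambda>j. PI) = d \<cdot>\<^sub>m pauli_mat n s" and j0: "j0 < n"
  shows "s j0 = PI"
proof -
  have "(c \<cdot>\<^sub>m pauli_mat n (\<lambda>j. PI)) $$ (0, 0) = (d \<cdot>\<^sub>m pauli_mat n s) $$ (0, 0)"
    using eq by simp
  then have e0: "c = d * (\<Prod>j<n. pmat (s j) False False)"
    by (simp add: pauli_index)
  have r: "(2::nat)^j0 < 2^n" using j0 by simp
  have "(c \<cdot>\<^sub>m pauli_mat n (\<lambda>j. PI)) $$ (2^j0, 2^j0) = (d \<cdot>\<^sub>m pauli_mat n s) $$ (2^j0, 2^j0)"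
    using eq by simp
  then have e1: "c = d * (\<Prod>j<n. pmat (s j) (j = j0) (j = j0))"
    using r by (simp add: pauli_index pauli_id00 bit_exp_iff)
  have nz: "(\<Prod>j<n. pmat (s j) False False) \<noteq> 0" using e0 c by auto
  then have "pmat (s j0) False False \<noteq> 0" using j0 by auto
  then have sj: "s j0 = PI \<or> s j0 = PZ" by (cases "s j0") auto
  define R where "R = (\<Prod>j\<in>{..<n} - {j0}. pmat (s j) False False)"
  have p0: "(\<Prod>j<n. pmat (s j) False False) = pmat (s j0) False False * R"
    unfolding R_def using j0 by (subst prod.remove[of _ j0]) auto
  have "(\<Prod>j<n. pmat (s j) (j = j0) (j = j0)) = pmat (s j0) True True * (\<Prod>j\<in>{..<n} - {j0}. pmat (s j) (j = j0) (j = j0))"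
    using j0 by (subst prod.remove[of _ j0]) auto
  also have "(\<Prod>j\<in>{..<n} - {j0}. pmat (s j) (j = j0) (j = j0)) = R"
    unfolding R_def by (rule prod.cong) auto
  finally have p1: "(\<Prod>j<n. pmat (s j) (j = j0) (j = j0)) = pmat (s j0) True True * R" .
  show ?thesis
  proof (rule ccontr)
    assume "s j0 \<noteq> PI"
    with sj have "s j0 = PZ" by simp
    with e0 e1 p0 p1 have "c = d * R" "c = - (d * R)" by auto
    then show False using c by simp
  qed
qed

lemma det_gen:
  assumes c: "c \<noteq> 0" and eq: "c \<cdot>\<^sub>m pauli_mat n a = d \<cdot>\<^sub>m pauli_mat n b" and j0: "j0 < n"
  shows "a j0 = b j0"
proof -
  have "(c \<cdot>\<^sub>m pauli_mat n a) * pauli_mat n a = (d \<cdot>\<^sub>m pauli_mat n b) * pauli_mat n a"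
    using eq by simp
  moreover have "(c \<cdot>\<^sub>m pauli_mat n a) * pauli_mat n a = (c * (\<Prod>j<n. om (a j) (a j))) \<cdot>\<^sub>m pauli_mat n (\<lambda>j. PI)"
    by (subst mult_smult_assoc_mat[where nr="2^n" and n="2^n" and nc="2^n"]) (auto simp: pauli_sq smult_smult_m)
  moreover have "(d \<cdot>\<^sub>m pauli_mat n b) * pauli_mat n a = (d * (\<Prod>j<n. om (b j) (a j))) \<cdot>\<^sub>m pauli_mat n (\<lambda>j. pmul1 (b j) (a j))"
    by (subst mult_smult_assoc_mat[where nr="2^n" and n="2^n" and nc="2^n"]) (auto simp: pauli_mult smult_smult_m)
  ultimately have "(c * (\<Prod>j<n. om (a j) (a j))) \<cdot>\<^sub>m pauli_mat n (\<lambda>j. PI)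
     = (d * (\<Prod>j<n. om (b j) (a j))) \<cdot>\<^sub>m pauli_mat n (\<lambda>j. pmul1 (b j) (a j))"
    by simp
  moreover have "c * (\<Prod>j<n. om (a j) (a j)) \<noteq> 0" using c om_nz by simp
  ultimately have "pmul1 (b j0) (a j0) = PI"
    using det_id[OF _ _ j0] by blast
  then show ?thesis by (cases "a j0"; cases "b j0"; simp)
qed

lemma sm_left:
  assumes A: "A \<in> carrier_mat N N" and M: "M \<in> carrier_mat N N" and B: "B \<in> carrier_mat N N"
  shows "A * (c \<cdot>\<^sub>m M) * B = (c::complex) \<cdot>\<^sub>m (A * M * B)"
proof -
  have "A * (c \<cdot>\<^sub>m M) = c \<cdot>\<^sub>m (A * M)" by (rule mult_smult_distrib[OF A M])
  moreover have "(c \<cdot>\<^sub>m (A * M)) * B = c \<cdot>\<^sub>m (A * M * B)"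
    by (rule mult_smult_assoc_mat[OF mult_carrier_mat[OF A M] B])
  ultimately show ?thesis by simp
qed

lemma sm_prod:
  assumes M: "M \<in> carrier_mat N N" and M': "M' \<in> carrier_mat N N"
  shows "(a \<cdot>\<^sub>m M) * (b \<cdot>\<^sub>m M') = ((a::complex) * b) \<cdot>\<^sub>m (M * M')"
proof -
  have "(a \<cdot>\<^sub>m M) * (b \<cdot>\<^sub>m M') = a \<cdot>\<^sub>m (M * (b \<cdot>\<^sub>m M'))"
    by (rule mult_smult_assoc_mat[OF M smult_carrier_mat[OF M']])
  also have "M * (b \<cdot>\<^sub>m M') = b \<cdot>\<^sub>m (M * M')" by (rule mult_smult_distrib[OF M M'])
  finally show ?thesis by (simp add: smult_smult_m)
qed

context
  fixes n :: nat and A B :: "complex mat"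
  assumes A: "A \<in> carrier_mat (2^n) (2^n)" and B: "B \<in> carrier_mat (2^n) (2^n)"
    and BA: "B * A = 1\<^sub>m (2^n)"
    and pres: "\<forall>p. \<exists>c p'. A * pauli_mat n p * B = c \<cdot>\<^sub>m pauli_mat n p'"
begin

lemma mcN[simp]: "X \<in> carrier_mat N N \<Longrightarrow> Y \<in> carrier_mat N N \<Longrightarrow> X * Y \<in> carrier_mat N N"
  by simp

lemma as3N: "X \<in> carrier_mat (2^n) (2^n) \<Longrightarrow> Y \<in> carrier_mat (2^n) (2^n) \<Longrightarrow> Z \<in> carrier_mat (2^n) (2^n) \<Longrightarrow> X * Y * Z = X * (Y * Z)"
  by (rule assoc_mult_mat)

lemma BAX: "X \<in> carrier_mat (2^n) k \<Longrightarrow> B * (A * X) = X"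
proof -
  assume X: "X \<in> carrier_mat (2^n) k"
  have "B * (A * X) = (B * A) * X" by (rule assoc_mult_mat[symmetric, OF B A X])
  then show ?thesis using BA X by simp
qed

lemma BAX2: "X \<in> carrier_mat (2^n) (2^n) \<Longrightarrow> B * (A * X) = X"
  by (rule BAX)

lemma conj_ex: "\<exists>p'. (\<forall>q\<ge>n. p' q = PI) \<and> (\<exists>c. A * pauli_mat n p * B = c \<cdot>\<^sub>m pauli_mat n p')"
proof -
  obtain c p' where e: "A * pauli_mat n p * B = c \<cdot>\<^sub>m pauli_mat n p'" using pres by blast
  have "pauli_mat n (\<lambda>q. if q < n then p' q else PI) = pauli_mat n p'"
    unfolding pauli_mat_def by (intro cong_mat refl) (auto intro!: prod.cong)
  then show ?thesis using e by (intro exI[of _ "\<lambda>q. if q < n then p' q else PI"]) auto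
qed

lemma conj_spec: "(\<forall>q\<ge>n. conj_pauli n A B p q = PI) \<and>
   (\<exists>c. A * pauli_mat n p * B = c \<cdot>\<^sub>m pauli_mat n (conj_pauli n A B p))"
  unfolding conj_pauli_def by (rule someI_ex[OF conj_ex])

lemma conj_nz: assumes "A * pauli_mat n p * B = c \<cdot>\<^sub>m pauli_mat n p'" shows "c \<noteq> 0"
proof
  assume "c = 0"
  then have z: "A * pauli_mat n p * B = 0\<^sub>m (2^n) (2^n)" using assms by (auto intro!: eq_matI)
  have "pauli_mat n p = B * (A * (pauli_mat n p * (B * A)))"
    using A B BA by (simp add: BAX[OF pauli_carrier])
  also have "\<dots> = B * (A * pauli_mat n p * B) * A"
    using A B by (simp add: as3N)
  also have "\<dots> = 0\<^sub>m (2^n) (2^n)" using z A B by simp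
  finally have "pauli_mat n p * pauli_mat n p = 0\<^sub>m (2^n) (2^n)" by simp
  then have "((\<Prod>j<n. om (p j) (p j)) \<cdot>\<^sub>m pauli_mat n (\<lambda>j. PI)) $$ (0,0) = 0"
    by (simp add: pauli_sq)
  then show False using om_nz by (simp add: pauli_id00)
qed

lemma conj_hom_out: "n \<le> q \<Longrightarrow> conj_pauli n A B a q = PI"
  using conj_spec by blast

lemma conj_hom_mult:
  "conj_pauli n A B (\<lambda>q. pmul1 (a q) (b q)) q = pmul1 (conj_pauli n A B a q) (conj_pauli n A B b q)"
proof (cases "q < n")
  case False then show ?thesis using conj_hom_out by simp
next
  case True
  let ?\<phi> = "conj_pauli n A B"
  let ?ab = "\<lambda>q. pmul1 (a q) (b q)"
  obtain ca where ha: "A * pauli_mat n a * B = ca \<cdot>\<^sub>m pauli_mat n (?\<phi> a)" using conj_spec by blast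
  obtain cb where hb: "A * pauli_mat n b * B = cb \<cdot>\<^sub>m pauli_mat n (?\<phi> b)" using conj_spec by blast
  obtain cab where hab: "A * pauli_mat n ?ab * B = cab \<cdot>\<^sub>m pauli_mat n (?\<phi> ?ab)" using conj_spec by blast
  have nz: "cab \<noteq> 0" using conj_nz[OF hab] .
  define \<Omega> where "\<Omega> = (\<Prod>j<n. om (a j) (b j))"
  define \<Omega>' where "\<Omega>' = (\<Prod>j<n. om (?\<phi> a j) (?\<phi> b j))"
  have "A * (pauli_mat n a * pauli_mat n b) * B = \<Omega> \<cdot>\<^sub>m (A * pauli_mat n ?ab * B)"
    unfolding pauli_mult \<Omega>_def using A B by (simp add: sm_left)
  also have "\<dots> = (\<Omega> * cab) \<cdot>\<^sub>m pauli_mat n (?\<phi> ?ab)" using hab by (simp add: smult_smult_m)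
  finally have l: "A * (pauli_mat n a * pauli_mat n b) * B = (\<Omega> * cab) \<cdot>\<^sub>m pauli_mat n (?\<phi> ?ab)" .
  have "A * (pauli_mat n a * pauli_mat n b) * B = (A * pauli_mat n a * B) * (A * pauli_mat n b * B)"
    using A B by (simp add: as3N BAX2)
  also have "\<dots> = (ca * cb * \<Omega>') \<cdot>\<^sub>m pauli_mat n (\<lambda>j. pmul1 (?\<phi> a j) (?\<phi> b j))"
    unfolding ha hb \<Omega>'_def
    by (simp add: sm_prod[of _ "2^n"] pauli_mult smult_smult_m)
  finally have "(\<Omega> * cab) \<cdot>\<^sub>m pauli_mat n (?\<phi> ?ab) = (ca * cb * \<Omega>') \<cdot>\<^sub>m pauli_mat n (\<lambda>j. pmul1 (?\<phi> a j) (?\<phi> b j))"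
    using l by simp
  moreover have "\<Omega> * cab \<noteq> 0" using nz om_nz by (simp add: \<Omega>_def)
  ultimately show ?thesis using det_gen[OF _ _ True] by blast
qed

lemma sandwich: "X \<in> carrier_mat (2^n) (2^n) \<Longrightarrow> B * (A * X * B) * A = X"
proof -
  assume X: "X \<in> carrier_mat (2^n) (2^n)"
  have "B * (A * X * B) * A = B * (A * (X * (B * A)))"
    using A B X by (simp add: as3N)
  also have "\<dots> = X" using X BA A B by (simp add: BAX2)
  finally show ?thesis .
qed

lemma conj_inj: assumes "\<forall>q\<ge>n. a q = PI" "\<forall>q\<ge>n. b q = PI" "conj_pauli n A B a = conj_pauli n A B b"
  shows "a = b"
proof -
  let ?\<phi> = "conj_pauli n A B"
  obtain ca where ha: "A * pauli_mat n a * B = ca \<cdot>\<^sub>m pauli_mat n (?\<phi> a)" using conj_spec by blast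
  obtain cb where hb: "A * pauli_mat n b * B = cb \<cdot>\<^sub>m pauli_mat n (?\<phi> a)" using conj_spec assms(3) by metis
  have nz: "cb \<noteq> 0" using conj_nz[OF hb] .
  have "cb \<cdot>\<^sub>m (A * pauli_mat n a * B) = ca \<cdot>\<^sub>m (A * pauli_mat n b * B)"
    unfolding ha hb by (simp add: smult_smult_m mult.commute)
  then have "B * (cb \<cdot>\<^sub>m (A * pauli_mat n a * B)) * A = B * (ca \<cdot>\<^sub>m (A * pauli_mat n b * B)) * A"
    by simp
  moreover have "B * (c \<cdot>\<^sub>m (A * pauli_mat n p * B)) * A = c \<cdot>\<^sub>m pauli_mat n p" for c p
  proof -
    have "B * (c \<cdot>\<^sub>m (A * pauli_mat n p * B)) * A = c \<cdot>\<^sub>m (B * (A * pauli_mat n p * B) * A)"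
      using A B by (simp add: sm_left)
    then show ?thesis by (simp add: sandwich)
  qed
  ultimately have "cb \<cdot>\<^sub>m pauli_mat n a = ca \<cdot>\<^sub>m pauli_mat n b" by simp
  then have "a j = b j" if "j < n" for j using det_gen[OF nz _ that] by blast
  then show ?thesis using assms(1,2) by (metis linorder_not_le ext)
qed

lemma finite_paulis: "finite {p :: nat \<Rightarrow> pauli1. \<forall>q\<ge>n. p q = PI}"
proof -
  have U: "finite (UNIV :: pauli1 set)"
  proof -
    have "(UNIV :: pauli1 set) \<subseteq> {PI, PX, PY, PZ}"
    proof
      fix x :: pauli1 show "x \<in> {PI, PX, PY, PZ}" by (cases x) auto
    qed
    then show ?thesis by (rule finite_subset) simp
  qed
  have "{p :: nat \<Rightarrow> pauli1. \<forall>q\<ge>n. p q = PI} \<subseteq> (\<lambda>xs q. if q < n then xs ! q else PI) ` {xs. set xs \<subseteq> UNIV \<and> length xs = n}"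
  proof
    fix p :: "nat \<Rightarrow> pauli1" assume "p \<in> {p. \<forall>q\<ge>n. p q = PI}"
    then have "p = (\<lambda>q. if q < n then map p [0..<n] ! q else PI)" by (auto simp: fun_eq_iff)
    then show "p \<in> (\<lambda>xs q. if q < n then xs ! q else PI) ` {xs. set xs \<subseteq> UNIV \<and> length xs = n}"
      by (intro image_eqI[of _ _ "map p [0..<n]"]) auto
  qed
  moreover have "finite {xs :: pauli1 list. set xs \<subseteq> UNIV \<and> length xs = n}"
    by (rule finite_lists_length_eq[OF U])
  ultimately show ?thesis by (meson finite_imageI finite_subset)
qed

lemma conj_surj: assumes "\<forall>q\<ge>n. p q = PI"
  shows "\<exists>a. (\<forall>q\<ge>n. a q = PI) \<and> conj_pauli n A B a = p"
proof -
  let ?P = "{p :: nat \<Rightarrow> pauli1. \<forall>q\<ge>n. p q = PI}"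
  have "conj_pauli n A B ` ?P = ?P"
  proof (rule endo_inj_surj[OF finite_paulis])
    show "conj_pauli n A B ` ?P \<subseteq> ?P"
    proof
      fix x assume "x \<in> conj_pauli n A B ` ?P"
      then obtain y where "x = conj_pauli n A B y" by blast
      then show "x \<in> ?P" using conj_hom_out by simp
    qed
    show "inj_on (conj_pauli n A B) ?P"
    proof (rule inj_onI)
      fix x y assume "x \<in> ?P" "y \<in> ?P" "conj_pauli n A B x = conj_pauli n A B y"
      then show "x = y" using conj_inj[of x y] by simp
    qed
  qed
  moreover have "p \<in> ?P" using assms by simp
  ultimately have "p \<in> conj_pauli n A B ` ?P" by simp
  then obtain a where "a \<in> ?P" "p = conj_pauli n A B a" by (rule imageE)
  then show ?thesis by auto
qed

end

lemma conj_hom: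
  assumes A: "A \<in> carrier_mat (2^n) (2^n)" and B: "B \<in> carrier_mat (2^n) (2^n)"
    and BA: "B * A = 1\<^sub>m (2^n)"
    and pres: "\<forall>p. \<exists>c p'. A * pauli_mat n p * B = c \<cdot>\<^sub>m pauli_mat n p'"
  shows "conj_pauli n A B (\<lambda>q. pmul1 (a q) (b q)) q = pmul1 (conj_pauli n A B a q) (conj_pauli n A B b q)"
    and "n \<le> q \<Longrightarrow> conj_pauli n A B a q = PI"
proof -
  show "conj_pauli n A B (\<lambda>q. pmul1 (a q) (b q)) q = pmul1 (conj_pauli n A B a q) (conj_pauli n A B b q)"
    by (rule conj_hom_mult[OF assms])
  show "n \<le> q \<Longrightarrow> conj_pauli n A B a q = PI"
    by (rule conj_hom_out[OF assms])
qed

lemma clifford_inv: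
  assumes cl: "clifford n U"
  shows "\<forall>p. \<exists>c p'. mat_adjoint U * pauli_mat n p * U = c \<cdot>\<^sub>m pauli_mat n p'"
proof
  fix p
  let ?V = "mat_adjoint U"
  have U: "U \<in> carrier_mat (2^n) (2^n)" and V: "?V \<in> carrier_mat (2^n) (2^n)"
    and UV: "U * ?V = 1\<^sub>m (2^n)" and VU: "?V * U = 1\<^sub>m (2^n)"
    and pres: "\<forall>p. \<exists>c p'. U * pauli_mat n p * ?V = c \<cdot>\<^sub>m pauli_mat n p'"
    using cl adjoint_carrier by (auto simp: clifford_def)
  define p0 where "p0 = (\<lambda>q. if q < n then p q else PI)"
  have pp0: "pauli_mat n p0 = pauli_mat n p"
    unfolding pauli_mat_def p0_def by (intro cong_mat refl) (auto intro!: prod.cong)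
  obtain a where "conj_pauli n U ?V a = p0"
    using conj_surj[OF U V VU pres, of p0] by (auto simp: p0_def)
  then obtain c where hc: "U * pauli_mat n a * ?V = c \<cdot>\<^sub>m pauli_mat n p"
    using conj_spec[OF U V VU pres, of a] pp0 by auto
  have nz: "c \<noteq> 0" using conj_nz[OF U V VU pres hc] .
  have "?V * (c \<cdot>\<^sub>m pauli_mat n p) * U = c \<cdot>\<^sub>m (?V * pauli_mat n p * U)"
    using U V by (simp add: sm_left)
  moreover have "?V * (c \<cdot>\<^sub>m pauli_mat n p) * U = pauli_mat n a"
    unfolding hc[symmetric] by (rule sandwich[OF U V VU pres]) simp
  ultimately have "?V * pauli_mat n p * U = (1 / c) \<cdot>\<^sub>m pauli_mat n a"
    using nz by (auto simp: smult_smult_m)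
  then show "\<exists>c p'. ?V * pauli_mat n p * U = c \<cdot>\<^sub>m pauli_mat n p'" by blast
qed

lemma cumulant_iso:
  assumes cl: "\<forall>l\<in>{1..\<Delta>}. clifford n (U l)"
  shows "k \<le> \<Delta> \<Longrightarrow> (\<lambda>F. cumulant_steps n U F k) \<in> iso (fault_group n \<Delta>) (fault_group n \<Delta>)"
proof (induction k)
  case 0
  then show ?case using iso_set_refl by simp
next
  case (Suc k)
  let ?\<phi> = "conj_pauli n (U (Suc k)) (mat_adjoint (U (Suc k)))"
  have c: "clifford n (U (Suc k))" using cl Suc.prems by auto
  have h: "?\<phi> (\<lambda>q. pmul1 (a q) (b q)) q = pmul1 (?\<phi> a q) (?\<phi> b q)"
    "n \<le> q \<Longrightarrow> ?\<phi> a q = PI" for a b q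
    using conj_hom[of "U (Suc k)" n "mat_adjoint (U (Suc k))"] c
    by (auto simp: clifford_def adjoint_carrier)
  have st: "(\<lambda>G. G(Suc k := (\<lambda>q. pmul1 (G (Suc k) q) (?\<phi> (G k) q)))) \<in> iso (fault_group n \<Delta>) (fault_group n \<Delta>)"
    by (rule step_iso) (use Suc.prems h in auto)
  have eq: "(\<lambda>F. cumulant_steps n U F (Suc k)) = (\<lambda>G. G(Suc k := (\<lambda>q. pmul1 (G (Suc k) q) (?\<phi> (G k) q)))) \<circ> (\<lambda>F. cumulant_steps n U F k)"
    by (simp add: fun_eq_iff Let_def)
  from iso_set_trans[OF Suc.IH[OF Suc_leD[OF Suc.prems]] st]
  show ?case unfolding eq .
qed

lemma back_iso:
  assumes cl: "\<forall>l\<in>{1..\<Delta>}. clifford n (U l)"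
  shows "k \<le> \<Delta> \<Longrightarrow> (\<lambda>F. back_steps n \<Delta> U F k) \<in> iso (fault_group n \<Delta>) (fault_group n \<Delta>)"
proof (induction k)
  case 0
  then show ?case using iso_set_refl by simp
next
  case (Suc k)
  define l where "l = \<Delta> - k"
  let ?\<phi> = "conj_pauli n (mat_adjoint (U l)) (U l)"
  have c: "clifford n (U l)" using cl Suc.prems by (auto simp: l_def)
  have h: "?\<phi> (\<lambda>q. pmul1 (a q) (b q)) q = pmul1 (?\<phi> a q) (?\<phi> b q)"
    "n \<le> q \<Longrightarrow> ?\<phi> a q = PI" for a b q
    using conj_hom[of "mat_adjoint (U l)" n "U l"] c clifford_inv[OF c]
    by (auto simp: clifford_def adjoint_carrier)
  have st: "(\<lambda>G. G(l - 1 := (\<lambda>q. pmul1 (G (l - 1) q) (?\<phi> (G l) q)))) \<in> iso (fault_group n \<Delta>) (fault_group n \<Delta>)"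
    by (rule step_iso) (use Suc.prems h in \<open>auto simp: l_def\<close>)
  have eq: "(\<lambda>F. back_steps n \<Delta> U F (Suc k)) = (\<lambda>G. G(l - 1 := (\<lambda>q. pmul1 (G (l - 1) q) (?\<phi> (G l) q)))) \<circ> (\<lambda>F. back_steps n \<Delta> U F k)"
    by (simp add: fun_eq_iff Let_def l_def)
  from iso_set_trans[OF Suc.IH[OF Suc_leD[OF Suc.prems]] st]
  show ?case unfolding eq .
qed

theorem mainTheorem7:
  fixes n \<Delta> :: nat and U :: "nat \<Rightarrow> complex mat"
  assumes "\<forall>l\<in>{1..\<Delta>}. clifford n (U l)"
  shows "cumulant n \<Delta> U \<in> iso (fault_group n \<Delta>) (fault_group n \<Delta>)
       \<and> back_cumulant n \<Delta> U \<in> iso (fault_group n \<Delta>) (fault_group n \<Delta>)"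
proof -
  have "cumulant n \<Delta> U = (\<lambda>F. cumulant_steps n U F \<Delta>)"
    by (simp add: fun_eq_iff cumulant_def)
  moreover have "back_cumulant n \<Delta> U = (\<lambda>F. back_steps n \<Delta> U F \<Delta>)"
    by (simp add: fun_eq_iff back_cumulant_def)
  ultimately show ?thesis using cumulant_iso[OF assms] back_iso[OF assms] by simp
qed

end
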